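(* Let $T$ be a triangle which is not of type $(90^\circ,60^\circ,30^\circ)$. Then the 3-graph $F_{3,2}$ with vertex set $[5]$ and edges $123,145,245,345$ is forbidden for $T$.
   Context: A 3-graph is a 3-uniform hypergraph; $G$ is $F$-free if it has no (not necessarily induced) subhypergraph isomorphic to $F$. A triangle is of type $(\alpha,\beta,\gamma)$ if $\alpha\ge\beta\ge\gamma$ are its interior angles in degrees. For a triangle $T$ with side lengths $a,b,c$ and $\varepsilon>0$, with $\varepsilon'=\varepsilon\min\{a,b,c\}$, a triangle $A'B'C'$ is $\varepsilon$-congruent to $T$ if there are $A,B,C\in\mathbb{R}^2$ with $ABC$ congruent to $T$ and $A',B',C'$ within distance $\varepsilon'$ of $A,B,C$ respectively. For finite $P\subseteq\mathbb{R}^2$, $\mathcal{H}(T,P,\varepsilon)$ is the 3-graph on $P$ whose edges are triples forming triangles $\varepsilon$-congruent to $T$. A 3-graph $H$ is forbidden for $T$ if there exists $\varepsilon>0$ such that for every $P\subseteq\mathbb{R}^2$ with $|P|=|V(H)|$, $\mathcal{H}(T,P,\varepsilon)$ is $H$-free. *)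

theory Defs
  imports "HOL-Analysis.Analysis"
begin

type_synonym pt = "real^2"

definition angle_at :: "pt \<Rightarrow> pt \<Rightarrow> pt \<Rightarrow> real" where
  "angle_at p q r = arccos (((q - p) \<bullet> (r - p)) / (norm (q - p) * norm (r - p)))"

definition is_triangle :: "pt \<Rightarrow> pt \<Rightarrow> pt \<Rightarrow> bool" where
  "is_triangle A0 B0 C0 \<longleftrightarrow> \<not> collinear {A0, B0, C0}"

definition type_90_60_30 :: "pt \<Rightarrow> pt \<Rightarrow> pt \<Rightarrow> bool" where
  "type_90_60_30 A0 B0 C0 \<longleftrightarrow>
     {# angle_at A0 B0 C0, angle_at B0 C0 A0, angle_at C0 A0 B0 #} = {# pi/2, pi/3, pi/6 #}"

definition congruent_to :: "pt \<Rightarrow> pt \<Rightarrow> pt \<Rightarrow> pt \<Rightarrow> pt \<Rightarrow> pt \<Rightarrow> bool" where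
  "congruent_to A B C A0 B0 C0 \<longleftrightarrow>
     dist A B = dist A0 B0 \<and> dist B C = dist B0 C0 \<and> dist C A = dist C0 A0"

definition eps_congruent :: "real \<Rightarrow> pt \<Rightarrow> pt \<Rightarrow> pt \<Rightarrow> pt \<Rightarrow> pt \<Rightarrow> pt \<Rightarrow> bool" where
  "eps_congruent \<epsilon> A' B' C' A0 B0 C0 \<longleftrightarrow>
     (let \<epsilon>' = \<epsilon> * Min {dist A0 B0, dist B0 C0, dist C0 A0} in
      \<exists>A B C. congruent_to A B C A0 B0 C0 \<and>
        dist A' A \<le> \<epsilon>' \<and> dist B' B \<le> \<epsilon>' \<and> dist C' C \<le> \<epsilon>')"

text \<open>A 3-graph is a pair (vertex set, edge set), edges being 3-element vertex sets.\<close>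
type_synonym 'a graph3 = "'a set \<times> 'a set set"

definition tri_hypergraph :: "pt \<Rightarrow> pt \<Rightarrow> pt \<Rightarrow> pt set \<Rightarrow> real \<Rightarrow> pt graph3" where
  "tri_hypergraph A0 B0 C0 P \<epsilon> =
     (P, {{x, y, z} | x y z. x \<in> P \<and> y \<in> P \<and> z \<in> P \<and>
            x \<noteq> y \<and> y \<noteq> z \<and> x \<noteq> z \<and> eps_congruent \<epsilon> x y z A0 B0 C0})"

definition contains_copy :: "'b graph3 \<Rightarrow> 'a graph3 \<Rightarrow> bool" where
  "contains_copy G H \<longleftrightarrow>
     (\<exists>f. inj_on f (fst H) \<and> f ` fst H \<subseteq> fst G \<and> (\<forall>e\<in>snd H. f ` e \<in> snd G))"

definition free_of :: "'a graph3 \<Rightarrow> 'b graph3 \<Rightarrow> bool" where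
  "free_of H G \<longleftrightarrow> \<not> contains_copy G H"

definition forbidden_for :: "'a graph3 \<Rightarrow> pt \<Rightarrow> pt \<Rightarrow> pt \<Rightarrow> bool" where
  "forbidden_for H A0 B0 C0 \<longleftrightarrow>
     (\<exists>\<epsilon>>0. \<forall>P. finite P \<and> card P = card (fst H) \<longrightarrow>
        free_of H (tri_hypergraph A0 B0 C0 P \<epsilon>))"

definition F32 :: "nat graph3" where
  "F32 = ({1..5}, {{1,2,3}, {1,4,5}, {2,4,5}, {3,4,5}})"

end

theory Submission
  imports Defs
begin

definition perm3 :: "real \<Rightarrow> real \<Rightarrow> real \<Rightarrow> real \<Rightarrow> real \<Rightarrow> real \<Rightarrow> bool" where
  "perm3 x y z a b c \<longleftrightarrow> (x=a \<and> y=b \<and> z=c) \<or> (x=a \<and> y=c \<and> z=b) \<or> (x=b \<and> y=a \<and> z=c)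
     \<or> (x=b \<and> y=c \<and> z=a) \<or> (x=c \<and> y=a \<and> z=b) \<or> (x=c \<and> y=b \<and> z=a)"

lemma grid:
  fixes p q r s U1 U2 U3 V1 V2 V3 :: real
  assumes "U1 = p \<or> U1 = q" "U2 = p \<or> U2 = q" "U3 = p \<or> U3 = q"
    "V1 = r \<or> V1 = s" "V2 = r \<or> V2 = s" "V3 = r \<or> V3 = s"
    "(U1-U2)^2+(V1-V2)^2 \<noteq> 0" "(U2-U3)^2+(V2-V3)^2 \<noteq> 0" "(U3-U1)^2+(V3-V1)^2 \<noteq> 0"
  shows "p \<noteq> q \<and> ((U1-U2)^2+(V1-V2)^2 + ((U2-U3)^2+(V2-V3)^2) + ((U3-U1)^2+(V3-V1)^2)
      = 2 * ((p-q)^2 + (r-s)^2)) \<and> ((r-s)^2 = (U1-U2)^2+(V1-V2)^2 \<or> (r-s)^2 = (U2-U3)^2+(V2-V3)^2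
      \<or> (r-s)^2 = (U3-U1)^2+(V3-V1)^2)"
  using assms by (auto simp: power2_commute[of q p] power2_commute[of s r])


definition SP :: "real \<Rightarrow> real \<Rightarrow> real \<Rightarrow> bool" where
  "SP x y z \<longleftrightarrow> (\<exists>t>0. perm3 (x^2) (y^2) (z^2) t (3*t) (4*t))"

lemma ucase:
  fixes d e f U V :: real
  assumes d: "d > 0" and h: "(U^2+V^2 = e^2 \<and> (U-d)^2+V^2 = f^2) \<or> (U^2+V^2 = f^2 \<and> (U-d)^2+V^2 = e^2)"
  defines "u0 \<equiv> (d^2+e^2-f^2)/(2*d)"
  shows "(U = u0 \<or> U = d - u0) \<and> V^2 = e^2 - u0^2"
  using h
proof
  assume a: "U^2+V^2 = e^2 \<and> (U-d)^2+V^2 = f^2"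
  have "2*U*d = d^2+e^2-f^2" using a by (auto simp: power2_eq_square algebra_simps)
  then have U: "U = u0" using d unfolding u0_def by (simp add: field_simps)
  show ?thesis using a U by auto
next
  assume a: "U^2+V^2 = f^2 \<and> (U-d)^2+V^2 = e^2"
  have "2*U*d = d^2+f^2-e^2" using a by (auto simp: power2_eq_square algebra_simps)
  then have U: "U = d - u0" using d unfolding u0_def by (simp add: field_simps power2_eq_square)
  have "V^2 = f^2 - (d-u0)^2" using a U by auto
  also have "\<dots> = e^2 - u0^2"
  proof -
    have "2*d*u0 = d^2+e^2-f^2" using d unfolding u0_def by (simp add: field_simps)
    then show ?thesis by (simp add: power2_eq_square algebra_simps)
  qed
  finally show ?thesis using U by auto
qed

lemma heron_pos:
  fixes d e f :: real
  assumes "d>0" "e>0" "f>0" "d<e+f" "e<d+f" "f<d+e"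
  shows "e^2 - ((d^2+e^2-f^2)/(2*d))^2 > 0"
proof -
  have "e^2 - ((d^2+e^2-f^2)/(2*d))^2 = ((f^2 - (d-e)^2) * ((d+e)^2 - f^2)) / (4*d^2)"
    using assms by (simp add: field_simps power2_eq_square)
  moreover have "f^2 - (d-e)^2 > 0"
  proof -
    have "\<bar>d-e\<bar> < f" using assms by auto
    then have "(d-e)^2 < f^2" by (metis abs_ge_zero power2_abs power_strict_mono zero_less_numeral)
    then show ?thesis by simp
  qed
  moreover have "(d+e)^2 - f^2 > 0"
  proof -
    have "f^2 < (d+e)^2" using assms by (intro power_strict_mono) auto
    then show ?thesis by simp
  qed
  ultimately show ?thesis using assms by simp
qed

lemma core:
  fixes d e f U1 V1 U2 V2 U3 V3 :: real
  assumes pos: "d>0" "e>0" "f>0" and tri: "d<e+f" "e<d+f" "f<d+e"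
    and h1: "(U1^2+V1^2 = e^2 \<and> (U1-d)^2+V1^2 = f^2) \<or> (U1^2+V1^2 = f^2 \<and> (U1-d)^2+V1^2 = e^2)"
    and h2: "(U2^2+V2^2 = e^2 \<and> (U2-d)^2+V2^2 = f^2) \<or> (U2^2+V2^2 = f^2 \<and> (U2-d)^2+V2^2 = e^2)"
    and h3: "(U3^2+V3^2 = e^2 \<and> (U3-d)^2+V3^2 = f^2) \<or> (U3^2+V3^2 = f^2 \<and> (U3-d)^2+V3^2 = e^2)"
    and pm: "perm3 ((U1-U2)^2+(V1-V2)^2) ((U2-U3)^2+(V2-V3)^2) ((U3-U1)^2+(V3-V1)^2) (d^2) (e^2) (f^2)"
  shows "SP d e f"
proof -
  define u0 where "u0 = (d^2+e^2-f^2)/(2*d)"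
  define hh where "hh = e^2 - u0^2"
  have hhpos: "hh > 0" unfolding hh_def u0_def using heron_pos[OF pos tri] .
  define r where "r = sqrt hh"
  have r2: "r^2 = hh" using hhpos unfolding r_def by simp
  have Vc: "V = r \<or> V = -r" if "V^2 = hh" for V
    using that r2 by (metis power2_eq_iff)
  have c1: "(U1 = u0 \<or> U1 = d - u0) \<and> V1^2 = hh" using ucase[OF pos(1) h1] unfolding u0_def hh_def by simp
  have c2: "(U2 = u0 \<or> U2 = d - u0) \<and> V2^2 = hh" using ucase[OF pos(1) h2] unfolding u0_def hh_def by simp
  have c3: "(U3 = u0 \<or> U3 = d - u0) \<and> V3^2 = hh" using ucase[OF pos(1) h3] unfolding u0_def hh_def by simp
  have nz: "(U1-U2)^2+(V1-V2)^2 \<noteq> 0" "(U2-U3)^2+(V2-V3)^2 \<noteq> 0" "(U3-U1)^2+(V3-V1)^2 \<noteq> 0"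
    using pm pos unfolding perm3_def by auto
  have G: "u0 \<noteq> d - u0 \<and> ((U1-U2)^2+(V1-V2)^2 + ((U2-U3)^2+(V2-V3)^2) + ((U3-U1)^2+(V3-V1)^2)
      = 2 * ((u0-(d-u0))^2 + (r-(-r))^2)) \<and> ((r-(-r))^2 = (U1-U2)^2+(V1-V2)^2 \<or> (r-(-r))^2 = (U2-U3)^2+(V2-V3)^2
      \<or> (r-(-r))^2 = (U3-U1)^2+(V3-V1)^2)"
    by (rule grid) (use c1 c2 c3 Vc nz in auto)
  have sum: "(U1-U2)^2+(V1-V2)^2 + ((U2-U3)^2+(V2-V3)^2) + ((U3-U1)^2+(V3-V1)^2) = d^2+e^2+f^2"
    using pm unfolding perm3_def by auto
  have rr: "(r-(-r))^2 = 4*hh" using r2 by (simp add: power2_eq_square algebra_simps)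
  have mem: "4*hh = d^2 \<or> 4*hh = e^2 \<or> 4*hh = f^2"
    using G pm rr unfolding perm3_def by auto
  have du: "2*d*u0 = d^2+e^2-f^2" using pos unfolding u0_def by (simp add: field_simps)
  have "2 * ((u0-(d-u0))^2 + 4*hh) = 2*(4*e^2 - 2*(2*d*u0) + d^2)"
    unfolding hh_def by (simp add: power2_eq_square algebra_simps)
  then have "d^2+e^2+f^2 = 2*(4*e^2 - 2*(d^2+e^2-f^2) + d^2)" using G sum rr du by simp
  then have pyth: "d^2 = e^2+f^2" by simp
  have u0e: "u0 * d = e^2" using du pyth by (simp add: algebra_simps power2_eq_square)
  have hhd: "d^2 * hh = e^2 * f^2"
  proof -
    have "d^2 * hh = d^2*e^2 - (u0*d)^2" unfolding hh_def by (simp add: power2_eq_square algebra_simps)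
    also have "\<dots> = e^2*(d^2 - e^2)" using u0e by (simp add: power2_eq_square algebra_simps)
    finally show ?thesis using pyth by simp
  qed
  have Wne: "2*u0 - d \<noteq> 0" using G by auto
  show ?thesis
    using mem
  proof (elim disjE)
    assume m: "4*hh = d^2"
    then have "4*e^2*f^2 = (e^2+f^2)^2" using hhd pyth by (metis mult.assoc mult.commute power2_eq_square)
    then have "(e^2-f^2)^2 = 0" by (simp add: power2_eq_square algebra_simps)
    then have "e^2 = f^2" by simp
    then have "2*u0*d - d*d = 0" using u0e pyth by (simp add: power2_eq_square algebra_simps)
    then have "(2*u0 - d)*d = 0" by (simp add: algebra_simps)
    then show ?thesis using Wne pos by simp
  next
    assume m: "4*hh = e^2"
    have "e^2*(d^2 - 4*f^2) = d^2*(e^2 - 4*hh)" using hhd by (simp add: algebra_simps)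
    then have "e^2*(d^2 - 4*f^2) = 0" using m by simp
    then have "d^2 = 4*f^2" using pos by simp
    then have "e^2 = 3*f^2" using pyth by simp
    then show ?thesis unfolding SP_def perm3_def using \<open>d^2 = 4*f^2\<close> pos
      by (intro exI[of _ "f^2"]) auto
  next
    assume m: "4*hh = f^2"
    have "f^2*(d^2 - 4*e^2) = d^2*(f^2 - 4*hh)" using hhd by (simp add: algebra_simps)
    then have "f^2*(d^2 - 4*e^2) = 0" using m by simp
    then have "d^2 = 4*e^2" using pos by simp
    then have "f^2 = 3*e^2" using pyth by simp
    then show ?thesis unfolding SP_def perm3_def using \<open>d^2 = 4*e^2\<close> pos
      by (intro exI[of _ "e^2"]) auto
  qed
qed


lemma sq2: "(norm (z::real^2))^2 = z$1^2 + z$2^2"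
  unfolding power2_norm_eq_inner by (simp add: inner_vec_def sum_2 power2_eq_square)

lemma in2: "(x::real^2) \<bullet> y = x$1*y$1 + x$2*y$2"
  by (simp add: inner_vec_def sum_2)

lemma sqdiv: "((A::real)/d)^2 + (B/d)^2 = (A^2+B^2)/d^2"
  by (simp add: power_divide add_divide_distrib)

definition UU :: "real^2 \<Rightarrow> real^2 \<Rightarrow> real^2 \<Rightarrow> real" where
  "UU q0 w x = ((x-q0) \<bullet> (w-q0)) / dist q0 w"
definition VV :: "real^2 \<Rightarrow> real^2 \<Rightarrow> real^2 \<Rightarrow> real" where
  "VV q0 w x = ((w-q0)$1*(x-q0)$2 - (w-q0)$2*(x-q0)$1) / dist q0 w"

lemma coord_dist:
  assumes "q0 \<noteq> w"
  shows "(dist x y)^2 = (UU q0 w x - UU q0 w y)^2 + (VV q0 w x - VV q0 w y)^2"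
proof -
  have dpos: "dist q0 w > 0" using assms by simp
  have d2: "(dist q0 w)^2 = (w-q0)$1^2 + (w-q0)$2^2" by (simp add: dist_norm norm_minus_commute[of q0 w] sq2)
  have e1: "UU q0 w x - UU q0 w y = ((x-y)$1*(w-q0)$1 + (x-y)$2*(w-q0)$2) / dist q0 w"
    unfolding UU_def in2 by (simp add: diff_divide_distrib[symmetric] algebra_simps)
  have e2: "VV q0 w x - VV q0 w y = ((w-q0)$1*(x-y)$2 - (w-q0)$2*(x-y)$1) / dist q0 w"
    unfolding VV_def by (simp add: diff_divide_distrib[symmetric] algebra_simps)
  have "(UU q0 w x - UU q0 w y)^2 + (VV q0 w x - VV q0 w y)^2
     = (((x-y)$1*(w-q0)$1 + (x-y)$2*(w-q0)$2)^2 + ((w-q0)$1*(x-y)$2 - (w-q0)$2*(x-y)$1)^2) / (dist q0 w)^2"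
    unfolding e1 e2 by (rule sqdiv)
  also have "((x-y)$1*(w-q0)$1 + (x-y)$2*(w-q0)$2)^2 + ((w-q0)$1*(x-y)$2 - (w-q0)$2*(x-y)$1)^2
      = ((x-y)$1^2 + (x-y)$2^2) * ((w-q0)$1^2 + (w-q0)$2^2)"
    by (simp add: power2_eq_square algebra_simps)
  also have "\<dots> = (dist x y)^2 * (dist q0 w)^2" by (simp only: d2) (simp add: dist_norm sq2)
  finally show ?thesis using dpos by simp
qed

lemma UU_o: "UU q0 w q0 = 0" and VV_o: "VV q0 w q0 = 0" by (simp_all add: UU_def VV_def)
lemma UU_w: "q0 \<noteq> w \<Longrightarrow> UU q0 w w = dist q0 w"
  by (simp add: UU_def dist_norm power2_norm_eq_inner[symmetric] norm_minus_commute power2_eq_square)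
lemma VV_w: "VV q0 w w = 0" by (simp add: VV_def algebra_simps)

lemma tri_facts:
  assumes "is_triangle A0 B0 C0"
  shows "A0 \<noteq> B0" "B0 \<noteq> C0" "C0 \<noteq> A0"
    "dist B0 C0 < dist C0 A0 + dist A0 B0" "dist C0 A0 < dist B0 C0 + dist A0 B0"
    "dist A0 B0 < dist B0 C0 + dist C0 A0"
proof -
  have nc: "\<not> collinear {A0,B0,C0}" using assms unfolding is_triangle_def .
  show "A0 \<noteq> B0" "B0 \<noteq> C0" "C0 \<noteq> A0" using nc by (auto simp: collinear_2 insert_commute)
  have nb: "\<not> between (B0,C0) A0" "\<not> between (C0,A0) B0" "\<not> between (A0,B0) C0"
    using nc collinear_between_cases by blast+
  show "dist B0 C0 < dist C0 A0 + dist A0 B0" "dist C0 A0 < dist B0 C0 + dist A0 B0"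
    "dist A0 B0 < dist B0 C0 + dist C0 A0"
    using nb dist_triangle[of B0 C0 A0] dist_triangle[of C0 A0 B0] dist_triangle[of A0 B0 C0]
    unfolding between by (auto simp: dist_commute)
qed

definition ang :: "real \<Rightarrow> real \<Rightarrow> real \<Rightarrow> real" where
  "ang x y z = arccos ((y^2+z^2-x^2)/(2*y*z))"

lemma ang_sym: "ang x y z = ang x z y"
  unfolding ang_def by (simp add: ac_simps)

lemma angle_at_ang: "angle_at p q r = ang (dist q r) (dist p q) (dist p r)"
proof -
  have "(dist q r)^2 = (norm (q-p))^2 + (norm (r-p))^2 - 2 * ((q-p) \<bullet> (r-p))"
  proof -
    have "q - r = (q-p) - (r-p)" by simp
    then have "(dist q r)^2 = ((q-p)-(r-p)) \<bullet> ((q-p)-(r-p))" by (simp add: dist_norm power2_norm_eq_inner)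
    also have "\<dots> = (norm (q-p))^2 + (norm (r-p))^2 - 2 * ((q-p) \<bullet> (r-p))"
      by (simp add: inner_diff_left inner_diff_right power2_norm_eq_inner inner_commute)
    finally show ?thesis .
  qed
  then have "(dist p q)^2 + (dist p r)^2 - (dist q r)^2 = 2 * ((q-p) \<bullet> (r-p))"
    by (simp add: dist_norm norm_minus_commute)
  then show ?thesis unfolding angle_at_def ang_def
    by (simp add: dist_norm norm_minus_commute[of q p] norm_minus_commute[of r p] mult.assoc)
qed

lemma ang6:
  assumes "y>0" "z>0" "t>0" "x^2 = t" "y^2 = 3*t" "z^2 = 4*t"
  shows "ang x y z = pi/6"
proof -
  have "(y*z)^2 = y^2*z^2" by (simp add: power_mult_distrib)
  also have "\<dots> = 12*t^2" using assms by (simp add: power2_eq_square)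
  finally have yz: "(y*z)^2 = 12*t^2" .
  define \<rho> where "\<rho> = (y^2+z^2-x^2)/(2*y*z)"
  have r: "\<rho> = 3*t/(y*z)" using assms unfolding \<rho>_def by (simp add: field_simps)
  have "\<rho>^2 = 9*t^2/(y*z)^2" unfolding r by (simp add: power_divide power_mult_distrib)
  also have "\<dots> = 3/4" using yz assms by (simp add: field_simps)
  also have "\<dots> = (sqrt 3/2)^2" by (simp add: power_divide)
  finally have "\<rho> = sqrt 3/2" using assms r by (subst (asm) power2_eq_iff_nonneg) auto
  moreover have "arccos (sqrt 3/2) = pi/6" using arccos_cos[of "pi/6"] by (simp add: cos_30)
  ultimately show ?thesis unfolding ang_def \<rho>_def[symmetric] by (simp only:)
qed

lemma ang3:
  assumes "y>0" "z>0" "t>0" "x^2 = 3*t" "y^2 = t" "z^2 = 4*t"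
  shows "ang x y z = pi/3"
proof -
  have "(y*z)^2 = y^2*z^2" by (simp add: power_mult_distrib)
  also have "\<dots> = (2*t)^2" using assms by (simp add: power2_eq_square)
  finally have yz: "(y*z)^2 = (2*t)^2" .
  then have "y*z = 2*t" using assms by (subst (asm) power2_eq_iff_nonneg) auto
  then have eq: "(y^2+z^2-x^2)/(2*y*z) = 1/2" using assms by (simp add: field_simps)
  moreover have "arccos (1/2) = pi/3" using arccos_cos[of "pi/3"] by (simp add: cos_60)
  then show ?thesis unfolding ang_def eq .
qed

lemma ang2:
  assumes "x^2 = 4*t" "y^2 + z^2 = 4*t"
  shows "ang x y z = pi/2"
  unfolding ang_def using assms by simp

lemma angv:
  assumes "x>0" "y>0" "z>0" "t>0" "perm3 (x^2) (y^2) (z^2) t (3*t) (4*t)"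
  shows "ang x y z = (if x^2 = t then pi/6 else if x^2 = 3*t then pi/3 else pi/2)"
  using assms(5) unfolding perm3_def
proof (elim disjE conjE)
  assume h: "x^2 = t" "y^2 = 3*t" "z^2 = 4*t" then show ?thesis using ang6[of y z t x] assms by simp
next
  assume h: "x^2 = t" "y^2 = 4*t" "z^2 = 3*t" then show ?thesis using ang6[of z y t x] assms ang_sym by simp
next
  assume h: "x^2 = 3*t" "y^2 = t" "z^2 = 4*t" then show ?thesis using ang3[of y z t x] assms by simp
next
  assume h: "x^2 = 3*t" "y^2 = 4*t" "z^2 = t" then show ?thesis using ang3[of z y t x] assms ang_sym by simp
next
  assume h: "x^2 = 4*t" "y^2 = t" "z^2 = 3*t" then show ?thesis using ang2[of x t y z] assms by simp
next
  assume h: "x^2 = 4*t" "y^2 = 3*t" "z^2 = t" then show ?thesis using ang2[of x t y z] assms by simp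
qed

lemma SP_type:
  assumes "A0 \<noteq> B0" "B0 \<noteq> C0" "C0 \<noteq> A0" "SP (dist B0 C0) (dist C0 A0) (dist A0 B0)"
  shows "type_90_60_30 A0 B0 C0"
proof -
  define a b c where "a = dist B0 C0" and "b = dist C0 A0" and "c = dist A0 B0"
  have pos: "a>0" "b>0" "c>0" using assms unfolding a_def b_def c_def by auto
  have A: "angle_at A0 B0 C0 = ang a c b" unfolding angle_at_ang a_def b_def c_def by (simp add: dist_commute)
  have B: "angle_at B0 C0 A0 = ang b a c" unfolding angle_at_ang a_def b_def c_def by (simp add: dist_commute)
  have C: "angle_at C0 A0 B0 = ang c b a" unfolding angle_at_ang a_def b_def c_def by (simp add: dist_commute)
  obtain t where t: "t>0" "perm3 (a^2) (b^2) (c^2) t (3*t) (4*t)" using assms(4) unfolding SP_def a_def b_def c_def by auto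
  have p1: "perm3 (a^2) (c^2) (b^2) t (3*t) (4*t)" "perm3 (b^2) (a^2) (c^2) t (3*t) (4*t)"
    "perm3 (c^2) (b^2) (a^2) t (3*t) (4*t)" using t(2) unfolding perm3_def by auto
  show ?thesis unfolding type_90_60_30_def A B C angv[OF pos(1) pos(3) pos(2) t(1) p1(1)]
    angv[OF pos(2) pos(1) pos(3) t(1) p1(2)] angv[OF pos(3) pos(2) pos(1) t(1) p1(3)]
    using t unfolding perm3_def by (auto simp: add_mset_commute)
qed


definition gg :: "real \<Rightarrow> real \<Rightarrow> real \<Rightarrow> real^2 \<Rightarrow> real^2 \<Rightarrow> real^2 \<Rightarrow> real" where
  "gg a b c x y z = max \<bar>dist x y - c\<bar> (max \<bar>dist y z - a\<bar> \<bar>dist z x - b\<bar>)"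

definition DD :: "real \<Rightarrow> real \<Rightarrow> real \<Rightarrow> real^2 \<Rightarrow> real^2 \<Rightarrow> real^2 \<Rightarrow> real" where
  "DD a b c x y z = min (gg a b c x y z) (min (gg a b c y z x) (min (gg a b c z x y)
      (min (gg a b c y x z) (min (gg a b c x z y) (gg a b c z y x)))))"

lemma min6a: "min (a1::real) (min a2 (min a3 (min a4 (min a5 a6)))) = min a4 (min a5 (min a6 (min a1 (min a2 a3))))"
  by linarith
lemma min6b: "min (a1::real) (min a2 (min a3 (min a4 (min a5 a6)))) = min a5 (min a6 (min a4 (min a3 (min a1 a2))))"
  by linarith

lemma DD_sym1: "DD a b c x y z = DD a b c y x z"
  unfolding DD_def by (rule min6a)

lemma DD_sym2: "DD a b c x y z = DD a b c x z y"
  unfolding DD_def by (rule min6b)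

lemma gg_nonneg: "gg a b c x y z \<ge> 0"
  unfolding gg_def by (simp add: le_max_iff_disj)

lemma DD_nonneg: "DD a b c x y z \<ge> 0"
  unfolding DD_def by (simp add: min.bounded_iff gg_nonneg)

lemma DD_le_gg: "DD a b c x y z \<le> gg a b c x y z"
  unfolding DD_def by (rule min.cobounded1)

lemma dist_transl: "dist (x - t) (y - (t::real^2)) = dist x y"
  by (simp add: dist_norm)

lemma DD_transl: "DD a b c (x - t) (y - t) (z - t) = DD a b c x y z"
  unfolding DD_def gg_def dist_transl ..

lemma DD_perm:
  assumes "p \<in> {x,y,z}" "q \<in> {x,y,z}" "r \<in> {x,y,z}" "p \<noteq> q" "q \<noteq> r" "p \<noteq> r"
  shows "DD a b c p q r = DD a b c x y z"
proof -
  have s: "DD a b c y x z = DD a b c x y z" "DD a b c x z y = DD a b c x y z"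
     "DD a b c y z x = DD a b c x y z" "DD a b c z x y = DD a b c x y z" "DD a b c z y x = DD a b c x y z"
    using DD_sym1[of a b c x y z] DD_sym2[of a b c x y z] DD_sym1[of a b c y z x] DD_sym2[of a b c y x z]
      DD_sym1[of a b c x z y] DD_sym2[of a b c z x y] by simp_all
  have "p = x \<or> p = y \<or> p = z" "q = x \<or> q = y \<or> q = z" "r = x \<or> r = y \<or> r = z" using assms(1-3) by auto
  then show ?thesis using assms(4-6) s by (elim disjE) simp_all
qed

lemma cont_test:
  "continuous_on S (\<lambda>p::((real^2) \<times> (real^2) \<times> (real^2)). DD a b c (fst p) (fst (snd p)) (snd (snd p)))"
  unfolding DD_def gg_def by (intro continuous_intros)


lemma DD0:
  assumes "DD a b c x y z = 0"
  shows "perm3 (dist x y) (dist y z) (dist z x) a b c"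
proof -
  have "gg a b c x y z = 0 \<or> gg a b c y z x = 0 \<or> gg a b c z x y = 0 \<or> gg a b c y x z = 0 \<or>
     gg a b c x z y = 0 \<or> gg a b c z y x = 0"
    using assms gg_nonneg[of a b c] unfolding DD_def by (smt (verit))
  then show ?thesis unfolding gg_def perm3_def
    by (elim disjE) (auto simp: dist_commute max_def split: if_splits)
qed

lemma perm3_trans: "perm3 x y z a b c \<Longrightarrow> perm3 p q r a b c \<Longrightarrow> perm3 x y z p q r"
  unfolding perm3_def by auto
lemma perm3_swap12: "perm3 x y z a b c \<Longrightarrow> perm3 y x z a b c"
  unfolding perm3_def by auto
lemma perm3_symm: "perm3 x y z a b c \<Longrightarrow> perm3 a b c x y z"
  unfolding perm3_def by auto
lemma perm3_cancel: "perm3 p d q a b c \<Longrightarrow> perm3 e d f a b c \<Longrightarrow> (p=e \<and> q=f) \<or> (p=f \<and> q=e)"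
  unfolding perm3_def by auto
lemma perm3_sq: "perm3 x y z a b c \<Longrightarrow> perm3 (x^2) (y^2) (z^2) (a^2) (b^2) (c^2)"
  unfolding perm3_def by auto
lemma perm3_pos: "perm3 x y z a b c \<Longrightarrow> a>0 \<Longrightarrow> b>0 \<Longrightarrow> c>0 \<Longrightarrow> x>0 \<and> y>0 \<and> z>0"
  unfolding perm3_def by auto
lemma perm3_tri: "perm3 x y z a b c \<Longrightarrow> a<b+c \<Longrightarrow> b<a+c \<Longrightarrow> c<a+b \<Longrightarrow> x<y+z \<and> y<x+z \<and> z<x+y"
  unfolding perm3_def by auto
lemma perm3_comp: "perm3 u v w p q r \<Longrightarrow> perm3 p q r s1 s2 s3 \<Longrightarrow> perm3 u v w s1 s2 s3"
  unfolding perm3_def by auto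
lemma SP_perm: "SP x y z \<Longrightarrow> perm3 x y z a b c \<Longrightarrow> SP a b c"
proof -
  assume "SP x y z" "perm3 x y z a b c"
  then obtain t where t: "t>0" "perm3 (x^2) (y^2) (z^2) t (3*t) (4*t)" unfolding SP_def by auto
  have "perm3 (a^2) (b^2) (c^2) (x^2) (y^2) (z^2)" using perm3_sq[OF perm3_symm[OF \<open>perm3 x y z a b c\<close>]] .
  then have "perm3 (a^2) (b^2) (c^2) t (3*t) (4*t)" using t(2) by (rule perm3_comp)
  then show "SP a b c" unfolding SP_def using t(1) by auto
qed

lemma hi_coord:
  assumes "q4 \<noteq> q5" "(dist x q4 = e \<and> dist q5 x = f) \<or> (dist x q4 = f \<and> dist q5 x = e)"
  shows "((UU q4 q5 x)^2 + (VV q4 q5 x)^2 = e^2 \<and> (UU q4 q5 x - dist q4 q5)^2 + (VV q4 q5 x)^2 = f^2) \<or>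
         ((UU q4 q5 x)^2 + (VV q4 q5 x)^2 = f^2 \<and> (UU q4 q5 x - dist q4 q5)^2 + (VV q4 q5 x)^2 = e^2)"
proof -
  have A: "(dist x q4)^2 = (UU q4 q5 x)^2 + (VV q4 q5 x)^2"
    using coord_dist[OF assms(1), of x q4] by (simp add: UU_o VV_o)
  have B: "(dist q5 x)^2 = (UU q4 q5 x - dist q4 q5)^2 + (VV q4 q5 x)^2"
    using coord_dist[OF assms(1), of x q5] by (simp add: UU_w[OF assms(1)] VV_w dist_commute)
  show ?thesis using assms(2) A B by auto
qed

lemma exact_conf:
  fixes x1 x2 x3 q4 q5 :: "real^2"
  assumes pos: "a>0" "b>0" "c>0" and tri: "a<b+c" "b<a+c" "c<a+b"
    and p0: "perm3 (dist x1 x2) (dist x2 x3) (dist x3 x1) a b c"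
    and p1: "perm3 (dist x1 q4) (dist q4 q5) (dist q5 x1) a b c"
    and p2: "perm3 (dist x2 q4) (dist q4 q5) (dist q5 x2) a b c"
    and p3: "perm3 (dist x3 q4) (dist q4 q5) (dist q5 x3) a b c"
  shows "SP a b c"
proof -
  define d e f where "d = dist q4 q5" and "e = dist x1 q4" and "f = dist q5 x1"
  have pe: "perm3 e d f a b c" using p1 unfolding d_def e_def f_def .
  have pd: "perm3 d e f a b c" using perm3_swap12[OF pe] .
  have dpos: "d>0" "e>0" "f>0" using perm3_pos[OF pd pos] by auto
  have dtri: "d<e+f" "e<d+f" "f<d+e" using perm3_tri[OF pd tri] by auto
  have ne: "q4 \<noteq> q5" using dpos unfolding d_def by auto
  have h1: "(dist x1 q4 = e \<and> dist q5 x1 = f) \<or> (dist x1 q4 = f \<and> dist q5 x1 = e)"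
    unfolding e_def f_def by simp
  have h2: "(dist x2 q4 = e \<and> dist q5 x2 = f) \<or> (dist x2 q4 = f \<and> dist q5 x2 = e)"
    using perm3_cancel[OF p2[folded d_def] pe] .
  have h3: "(dist x3 q4 = e \<and> dist q5 x3 = f) \<or> (dist x3 q4 = f \<and> dist q5 x3 = e)"
    using perm3_cancel[OF p3[folded d_def] pe] .
  have pm0: "perm3 (dist x1 x2) (dist x2 x3) (dist x3 x1) d e f" using perm3_trans[OF p0 pd] .
  have pm: "perm3 ((UU q4 q5 x1 - UU q4 q5 x2)^2 + (VV q4 q5 x1 - VV q4 q5 x2)^2)
                  ((UU q4 q5 x2 - UU q4 q5 x3)^2 + (VV q4 q5 x2 - VV q4 q5 x3)^2)
                  ((UU q4 q5 x3 - UU q4 q5 x1)^2 + (VV q4 q5 x3 - VV q4 q5 x1)^2) (d^2) (e^2) (f^2)"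
    using perm3_sq[OF pm0] unfolding coord_dist[OF ne] .
  have "SP d e f"
    by (rule core[OF dpos dtri hi_coord[OF ne h1, folded d_def] hi_coord[OF ne h2, folded d_def]
        hi_coord[OF ne h3, folded d_def] pm])
  then show ?thesis using SP_perm pd by blast
qed

lemma DD_bound:
  assumes "DD a b c x y z \<le> 1" "a \<ge> 0" "b \<ge> 0" "c \<ge> 0"
  shows "dist x y \<le> a+b+c+1 \<and> dist y z \<le> a+b+c+1 \<and> dist z x \<le> a+b+c+1"
proof -
  have "gg a b c x y z \<le> 1 \<or> gg a b c y z x \<le> 1 \<or> gg a b c z x y \<le> 1 \<or> gg a b c y x z \<le> 1 \<or>
     gg a b c x z y \<le> 1 \<or> gg a b c z y x \<le> 1"
    using assms(1) unfolding DD_def by (simp add: min_le_iff_disj)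
  then show ?thesis unfolding gg_def using assms(2-4)
    by (elim disjE) (auto simp: dist_commute abs_le_iff)
qed

lemma dist_diff_le: "\<bar>dist x y - dist A B\<bar> \<le> dist x A + dist y B"
proof -
  have 1: "dist x y \<le> dist x A + dist A y" by (rule dist_triangle)
  have 2: "dist A y \<le> dist A B + dist B y" by (rule dist_triangle)
  have 3: "dist A B \<le> dist A x + dist x B" by (rule dist_triangle)
  have 4: "dist x B \<le> dist x y + dist y B" by (rule dist_triangle)
  have 5: "dist A x = dist x A" "dist B y = dist y B" by (simp_all add: dist_commute)
  show ?thesis using 1 2 3 4 5 by linarith
qed


theorem lemma2p6:
  fixes A0 B0 C0 :: "real^2"
  assumes "is_triangle A0 B0 C0"
    and "\<not> type_90_60_30 A0 B0 C0"
  shows "forbidden_for F32 A0 B0 C0"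
proof -
  define a b c where "a = dist B0 C0" and "b = dist C0 A0" and "c = dist A0 B0"
  note tf = tri_facts[OF assms(1)]
  have pos: "a>0" "b>0" "c>0" using tf(1-3) unfolding a_def b_def c_def by auto
  have tri: "a<b+c" "b<a+c" "c<a+b" using tf(4-6) unfolding a_def b_def c_def by auto
  have exact: False if "DD a b c x1 x2 x3 = 0" "DD a b c x1 x4 x5 = 0" "DD a b c x2 x4 x5 = 0"
    "DD a b c x3 x4 x5 = 0" for x1 x2 x3 x4 x5
  proof -
    have "SP a b c"
      by (rule exact_conf[OF pos tri DD0[OF that(1)] DD0[OF that(2)] DD0[OF that(3)] DD0[OF that(4)]])
    then have "type_90_60_30 A0 B0 C0" using SP_type tf(1-3) unfolding a_def b_def c_def by blast
    then show False using assms(2) by simp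
  qed
  define Phi where "Phi = (\<lambda>p::(real^2) \<times> (real^2) \<times> (real^2) \<times> (real^2) \<times> (real^2).
     max (DD a b c (fst p) (fst (snd p)) (fst (snd (snd p))))
      (max (DD a b c (fst p) (fst (snd (snd (snd p)))) (snd (snd (snd (snd p)))))
       (max (DD a b c (fst (snd p)) (fst (snd (snd (snd p)))) (snd (snd (snd (snd p)))))
            (DD a b c (fst (snd (snd p))) (fst (snd (snd (snd p)))) (snd (snd (snd (snd p))))))))"
  define R where "R = a+b+c+1"
  define K where "K = cball (0::real^2) R \<times> cball (0::real^2) R \<times> cball (0::real^2) R \<times> {0::real^2}
     \<times> cball (0::real^2) R"
  have Kc: "compact K" unfolding K_def by (intro compact_Times compact_cball compact_sing)
  have Kne: "K \<noteq> {}" unfolding K_def R_def using pos by auto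
  have Pc: "continuous_on K Phi" unfolding Phi_def DD_def gg_def by (intro continuous_intros)
  obtain q where q: "q \<in> K" "\<forall>y\<in>K. Phi q \<le> Phi y" using continuous_attains_inf[OF Kc Kne Pc] by blast
  have le: "DD a b c (fst p) (fst (snd p)) (fst (snd (snd p))) \<le> Phi p"
    "DD a b c (fst p) (fst (snd (snd (snd p)))) (snd (snd (snd (snd p)))) \<le> Phi p"
    "DD a b c (fst (snd p)) (fst (snd (snd (snd p)))) (snd (snd (snd (snd p)))) \<le> Phi p"
    "DD a b c (fst (snd (snd p))) (fst (snd (snd (snd p)))) (snd (snd (snd (snd p)))) \<le> Phi p" for p
    unfolding Phi_def by simp_all
  have Phi_nn: "Phi p \<ge> 0" for p using le(1)[of p] DD_nonneg[of a b c] by (meson order_trans)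
  have Pq: "Phi q > 0"
  proof (rule ccontr)
    assume "\<not> Phi q > 0"
    then have z: "Phi q = 0" using Phi_nn[of q] by simp
    have zero: "X = 0" if "X \<le> Phi q" "X \<ge> 0" for X using that z by linarith
    show False
      apply (rule exact[of "fst q" "fst (snd q)" "fst (snd (snd q))" "fst (snd (snd (snd q)))" "snd (snd (snd (snd q)))"])
      apply (rule zero, rule le, rule DD_nonneg)+
      done
  qed
  define m where "m = min (Phi q) 1"
  have m: "m > 0" "m \<le> Phi q" "m \<le> 1" using Pq unfolding m_def by auto
  define M where "M = Min {dist A0 B0, dist B0 C0, dist C0 A0}"
  have M: "M = min c (min a b)" unfolding M_def a_def b_def c_def by simp
  have Mpos: "M > 0" using pos unfolding M by simp
  define \<epsilon> where "\<epsilon> = m / (4*M)"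
  have epos: "\<epsilon> > 0" using m Mpos unfolding \<epsilon>_def by simp
  have eM: "2*(\<epsilon>*M) = m/2" using Mpos unfolding \<epsilon>_def by (simp add: field_simps)
  show ?thesis unfolding forbidden_for_def
  proof (intro exI[of _ \<epsilon>] conjI allI impI)
    show "\<epsilon> > 0" by (rule epos)
    fix P :: "(real^2) set"
    show "free_of F32 (tri_hypergraph A0 B0 C0 P \<epsilon>)"
      unfolding free_of_def contains_copy_def
    proof
      assume "\<exists>f. inj_on f (fst F32) \<and> f ` fst F32 \<subseteq> fst (tri_hypergraph A0 B0 C0 P \<epsilon>) \<and>
         (\<forall>e\<in>snd F32. f ` e \<in> snd (tri_hypergraph A0 B0 C0 P \<epsilon>))"
      then obtain f :: "nat \<Rightarrow> real^2" where inj: "inj_on f {1..5}"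
        and ed: "\<forall>e\<in>{{1,2,3},{1,4,5},{2,4,5},{3,4,5}}. f ` e \<in> snd (tri_hypergraph A0 B0 C0 P \<epsilon>)"
        unfolding F32_def by auto
      have key: "DD a b c (f i) (f j) (f k) \<le> m/2"
        if "{i,j,k} \<in> {{1,2,3},{1,4,5},{2,4,5},{3,4,5}}" "i \<in> {1..5}" "j \<in> {1..5}" "k \<in> {1..5}"
           "i\<noteq>j" "j\<noteq>k" "i\<noteq>k" for i j k :: nat
      proof -
        have "f ` {i,j,k} \<in> snd (tri_hypergraph A0 B0 C0 P \<epsilon>)" using ed that(1) by blast
        then obtain x y z where xyz: "{f i, f j, f k} = {x,y,z}" "eps_congruent \<epsilon> x y z A0 B0 C0"
          unfolding tri_hypergraph_def by auto
        then obtain A B C where cg: "congruent_to A B C A0 B0 C0"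
          and dA: "dist x A \<le> \<epsilon>*M" "dist y B \<le> \<epsilon>*M" "dist z C \<le> \<epsilon>*M"
          unfolding eps_congruent_def Let_def M_def by auto
        have g1: "\<bar>dist x y - c\<bar> \<le> 2*(\<epsilon>*M)" using dist_diff_le[of x y A B] cg dA
          unfolding congruent_to_def c_def by simp
        have g2: "\<bar>dist y z - a\<bar> \<le> 2*(\<epsilon>*M)" using dist_diff_le[of y z B C] cg dA
          unfolding congruent_to_def a_def by simp
        have g3: "\<bar>dist z x - b\<bar> \<le> 2*(\<epsilon>*M)" using dist_diff_le[of z x C A] cg dA
          unfolding congruent_to_def b_def by simp
        have gg: "gg a b c x y z \<le> 2*(\<epsilon>*M)" unfolding gg_def using g1 g2 g3 by simp
        have fd: "f i \<noteq> f j" "f j \<noteq> f k" "f i \<noteq> f k" using inj that(2-7) by (auto dest: inj_onD)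
        have "DD a b c (f i) (f j) (f k) = DD a b c x y z"
          by (rule DD_perm) (use xyz(1) fd in blast)+
        then show ?thesis using DD_le_gg[of a b c x y z] gg eM by linarith
      qed
      have k1: "DD a b c (f 1) (f 2) (f 3) \<le> m/2" by (rule key) auto
      have k2: "DD a b c (f 1) (f 4) (f 5) \<le> m/2" by (rule key) auto
      have k3: "DD a b c (f 2) (f 4) (f 5) \<le> m/2" by (rule key) auto
      have k4: "DD a b c (f 3) (f 4) (f 5) \<le> m/2" by (rule key) auto
      define p where "p = (f 1 - f 4, f 2 - f 4, f 3 - f 4, f 4 - f 4, f 5 - f 4)"
      have Pp: "Phi p \<le> m/2" unfolding Phi_def p_def fst_conv snd_conv DD_transl
        using k1 k2 k3 k4 by simp
      have b1: "dist (f 1) (f 4) \<le> R \<and> dist (f 4) (f 5) \<le> R"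
        using DD_bound[of a b c "f 1" "f 4" "f 5"] k2 m pos unfolding R_def by linarith
      have b2: "dist (f 2) (f 4) \<le> R"
        using DD_bound[of a b c "f 2" "f 4" "f 5"] k3 m pos unfolding R_def by linarith
      have b3: "dist (f 3) (f 4) \<le> R"
        using DD_bound[of a b c "f 3" "f 4" "f 5"] k4 m pos unfolding R_def by linarith
      have pK: "p \<in> K" unfolding K_def p_def using b1 b2 b3
        by (simp add: dist_norm norm_minus_commute)
      have "Phi q \<le> Phi p" using q pK by auto
      then show False using Pp m by linarith
    qed
  qed
qed


end
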